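(* Let $n,k\ge1$, let $D=\{x\in\{0,\ldots,k-1\}^n:(\sum_i x_i)\bmod k=0\}$ and for $x\in D$ let $F(x)=\frac1k\big[(\sum_{i=1}^n x_i)\bmod 2k\big]\in\{0,1\}$. In the model where the $n$ parties share prior entanglement and communicate by classical broadcast, the communication complexity of computing $F(x)$ (on inputs $x\in D$, party $i$ holding $x_i$) is $O(n)$.
   Context: In the model with prior entanglement, the parties share an arbitrary entangled quantum state (e.g. the $n$-qubit state $(|0^n\rangle+|1^n\rangle)/\sqrt2$, one qubit per party), may perform local measurements depending on their inputs, and then broadcast classical bits; the communication complexity is the number of classical bits broadcast needed so that the parties can determine $F(x)$. *)

theory Defs
  imports Complex_Main "HOL-Library.FuncSet"
begin

definition ghz_dom :: "nat \<Rightarrow> nat \<Rightarrow> (nat \<Rightarrow> nat) set" where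
  "ghz_dom n k = {x \<in> Pi\<^sub>E {..<n} (\<lambda>_. {..<k}). (\<Sum>i<n. x i) mod k = 0}"

definition ghz_F :: "nat \<Rightarrow> nat \<Rightarrow> (nat \<Rightarrow> nat) \<Rightarrow> nat" where
  "ghz_F n k x = ((\<Sum>i<n. x i) mod (2 * k)) div k"

text \<open>Joint index set of the shared state: party i owns a local system of dimension d i.\<close>
definition joint_idx :: "nat \<Rightarrow> (nat \<Rightarrow> nat) \<Rightarrow> (nat \<Rightarrow> nat) set" where
  "joint_idx n d = Pi\<^sub>E {..<n} (\<lambda>i. {..<d i})"

text \<open>A d x d complex matrix (rows indexed by outcome, columns by basis index) is unitary.\<close>
definition unitary_mat :: "nat \<Rightarrow> (nat \<Rightarrow> nat \<Rightarrow> complex) \<Rightarrow> bool" where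
  "unitary_mat dd M \<longleftrightarrow>
     (\<forall>a<dd. \<forall>a'<dd. (\<Sum>b<dd. M a b * cnj (M a' b)) = (if a = a' then 1 else 0))"

text \<open>Born rule: probability of joint outcome a when party i measures its subsystem
  in the orthonormal basis given by the rows of U i (x i).\<close>
definition outcome_prob ::
  "nat \<Rightarrow> (nat \<Rightarrow> nat) \<Rightarrow> ((nat \<Rightarrow> nat) \<Rightarrow> complex) \<Rightarrow>
   (nat \<Rightarrow> nat \<Rightarrow> nat \<Rightarrow> nat \<Rightarrow> complex) \<Rightarrow> (nat \<Rightarrow> nat) \<Rightarrow> (nat \<Rightarrow> nat) \<Rightarrow> real" where
  "outcome_prob n d \<psi> U x a =
     (cmod (\<Sum>j\<in>joint_idx n d. \<psi> j * (\<Prod>i<n. cnj (U i (x i) (a i) (j i))))) ^ 2"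

text \<open>Classical broadcast phase: L rounds; in each round the speaker (determined by the
  transcript so far) broadcasts one bit computed from its input, its measurement outcome
  and the transcript so far.\<close>
fun transcript ::
  "(bool list \<Rightarrow> nat) \<Rightarrow> (nat \<Rightarrow> nat \<Rightarrow> nat \<Rightarrow> bool list \<Rightarrow> bool) \<Rightarrow>
   (nat \<Rightarrow> nat) \<Rightarrow> (nat \<Rightarrow> nat) \<Rightarrow> nat \<Rightarrow> bool list" where
  "transcript spk msg x a 0 = []"
| "transcript spk msg x a (Suc m) =
     (let t = transcript spk msg x a m; i = spk t in t @ [msg i (x i) (a i) t])"

text \<open>An entanglement-assisted broadcast protocol with L broadcast bits that computes F
  exactly on domain D: for every input in D and every measurement outcome of positive
  probability, the (public) transcript determines F(x).\<close>
definition ent_protocol_computes ::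
  "nat \<Rightarrow> (nat \<Rightarrow> nat) set \<Rightarrow> ((nat \<Rightarrow> nat) \<Rightarrow> nat) \<Rightarrow>
   (nat \<Rightarrow> nat) \<Rightarrow> ((nat \<Rightarrow> nat) \<Rightarrow> complex) \<Rightarrow> (nat \<Rightarrow> nat \<Rightarrow> nat \<Rightarrow> nat \<Rightarrow> complex) \<Rightarrow>
   (bool list \<Rightarrow> nat) \<Rightarrow> (nat \<Rightarrow> nat \<Rightarrow> nat \<Rightarrow> bool list \<Rightarrow> bool) \<Rightarrow> nat \<Rightarrow> (bool list \<Rightarrow> nat) \<Rightarrow> bool" where
  "ent_protocol_computes n D F d \<psi> U spk msg L out \<longleftrightarrow>
     (\<forall>i<n. 1 \<le> d i) \<and>
     (\<Sum>j\<in>joint_idx n d. (cmod (\<psi> j)) ^ 2) = 1 \<and>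
     (\<forall>i<n. \<forall>v. unitary_mat (d i) (U i v)) \<and>
     (\<forall>t. spk t < n) \<and>
     (\<forall>x\<in>D. \<forall>a\<in>joint_idx n d. outcome_prob n d \<psi> U x a > 0 \<longrightarrow>
        out (transcript spk msg x a L) = F x)"

definition ent_cc_le :: "nat \<Rightarrow> (nat \<Rightarrow> nat) set \<Rightarrow> ((nat \<Rightarrow> nat) \<Rightarrow> nat) \<Rightarrow> nat \<Rightarrow> bool" where
  "ent_cc_le n D F L \<longleftrightarrow>
     (\<exists>d \<psi> U spk msg out. ent_protocol_computes n D F d \<psi> U spk msg L out)"

end

theory Submission
  imports Defs
begin

lemma prod_cis: "finite A \<Longrightarrow> (\<Prod>i\<in>A. cis (f i)) = cis (\<Sum>i\<in>A. f i)"
  by (induction A rule: finite_induct) (auto simp: cis_mult)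

definition cc :: complex where "cc = complex_of_real (1 / sqrt 2)"

lemma cc_sq: "cc * cc = 1/2"
  unfolding cc_def by (simp flip: of_real_mult)

lemma cc_sq': "cc * (cc * z) = z / 2"
  by (simp add: mult.assoc[symmetric] cc_sq)

lemma cc_cis: "cc * cis (- t) * (cc * cis t) = 1/2"
proof -
  have "cc * cis (- t) * (cc * cis t) = (cc * cc) * (cis (-t) * cis t)" by (simp add: algebra_simps)
  also have "\<dots> = 1/2" by (simp add: cc_sq cis_mult)
  finally show ?thesis .
qed

lemma cnj_cc[simp]: "cnj cc = cc"
  unfolding cc_def by simp

definition zz :: "nat \<Rightarrow> nat \<Rightarrow> (nat \<Rightarrow> nat)" where
  "zz n v = restrict (\<lambda>_. v) {..<n}"

definition psi :: "nat \<Rightarrow> (nat \<Rightarrow> nat) \<Rightarrow> complex" where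
  "psi n j = (if j \<in> {zz n 0, zz n 1} then cc else 0)"

definition UU :: "nat \<Rightarrow> nat \<Rightarrow> nat \<Rightarrow> nat \<Rightarrow> nat \<Rightarrow> complex" where
  "UU k i v a b = cc * (-1) ^ (a * b) * cis (- (pi * real v * real b / real k))"

lemma cnj_UU: "cnj (UU k i v a b) = cc * (-1) ^ (a * b) * cis (pi * real v * real b / real k)"
  unfolding UU_def by (simp add: cis_cnj)

lemma zz_in: "zz n v \<in> joint_idx n (\<lambda>_. 2)" if "v < 2"
  using that unfolding zz_def joint_idx_def by auto

lemma zz_neq: "1 \<le> n \<Longrightarrow> zz n 0 \<noteq> zz n 1"
  unfolding zz_def by (metis One_nat_def lessThan_iff less_one neq0_conv not_less restrict_apply' zero_neq_one le_eq_less_or_eq)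

lemma sum_two:
  assumes "1 \<le> n"
  shows "(\<Sum>j\<in>joint_idx n (\<lambda>_. 2). (if j \<in> {zz n 0, zz n 1} then g j else 0)) = g (zz n 0) + g (zz n 1)"
proof -
  have fin: "finite (joint_idx n (\<lambda>_. 2))" unfolding joint_idx_def by (simp add: finite_PiE)
  have "(\<Sum>j\<in>joint_idx n (\<lambda>_. 2). (if j \<in> {zz n 0, zz n 1} then g j else 0))
      = (\<Sum>j\<in>joint_idx n (\<lambda>_. 2) \<inter> {zz n 0, zz n 1}. g j)"
    using fin by (simp add: sum.inter_restrict)
  also have "joint_idx n (\<lambda>_. 2) \<inter> {zz n 0, zz n 1} = {zz n 0, zz n 1}"
    using zz_in[of 0 n] zz_in[of 1 n] by auto
  finally show ?thesis using zz_neq[OF assms] by simp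
qed

lemma unit_UU: "unitary_mat 2 (UU k i v)"
  unfolding unitary_mat_def
proof (intro allI impI)
  fix a a' :: nat assume "a < 2" "a' < 2"
  then have "a \<in> {0,1}" "a' \<in> {0,1}" by auto
  then show "(\<Sum>b<2. UU k i v a b * cnj (UU k i v a' b)) = (if a = a' then 1 else 0)"
    by (auto simp: numeral_2_eq_2 UU_def cis_cnj cis_mult cc_sq cc_sq' cc_cis)
qed

lemma prod_z0: "(\<Prod>i<n. cnj (UU k i (x i) (a i) (zz n 0 i))) = cc ^ n"
  by (simp add: cnj_UU zz_def)

lemma prod_z1: "(\<Prod>i<n. cnj (UU k i (x i) (a i) (zz n 1 i)))
   = cc ^ n * (-1) ^ (\<Sum>i<n. a i) * cis (pi * real (\<Sum>i<n. x i) / real k)"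
proof -
  have "(\<Prod>i<n. cnj (UU k i (x i) (a i) (zz n 1 i))) = (\<Prod>i<n. cc * (-1) ^ (a i) * cis (pi * real (x i) / real k))"
    by (rule prod.cong) (auto simp: cnj_UU zz_def)
  also have "\<dots> = cc ^ n * (\<Prod>i<n. (-1) ^ (a i)) * (\<Prod>i<n. cis (pi * real (x i) / real k))"
    by (simp add: prod.distrib)
  also have "(\<Prod>i<n. cis (pi * real (x i) / real k)) = cis (\<Sum>i<n. pi * real (x i) / real k)"
    by (simp add: prod_cis)
  also have "(\<Sum>i<n. pi * real (x i) / real k) = pi * real (\<Sum>i<n. x i) / real k"
    by (simp add: sum_distrib_left sum_divide_distrib)
  also have "(\<Prod>i<n. (-1::complex) ^ (a i)) = (-1) ^ (\<Sum>i<n. a i)"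
    by (simp add: power_sum)
  finally show ?thesis .
qed

lemma amp:
  assumes "1 \<le> n"
  shows "(\<Sum>j\<in>joint_idx n (\<lambda>_. 2). psi n j * (\<Prod>i<n. cnj (UU k i (x i) (a i) (j i))))
     = cc * cc ^ n * (1 + (-1) ^ (\<Sum>i<n. a i) * cis (pi * real (\<Sum>i<n. x i) / real k))"
proof -
  have "(\<Sum>j\<in>joint_idx n (\<lambda>_. 2). psi n j * (\<Prod>i<n. cnj (UU k i (x i) (a i) (j i))))
     = (\<Sum>j\<in>joint_idx n (\<lambda>_. 2). (if j \<in> {zz n 0, zz n 1} then cc * (\<Prod>i<n. cnj (UU k i (x i) (a i) (j i))) else 0))"
    by (rule sum.cong) (auto simp: psi_def)
  also have "\<dots> = cc * (\<Prod>i<n. cnj (UU k i (x i) (a i) (zz n 0 i))) + cc * (\<Prod>i<n. cnj (UU k i (x i) (a i) (zz n 1 i)))"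
    by (rule sum_two[OF assms])
  finally show ?thesis unfolding prod_z0 prod_z1 by (simp add: algebra_simps)
qed

lemma norm_psi:
  assumes "1 \<le> n"
  shows "(\<Sum>j\<in>joint_idx n (\<lambda>_. 2). (cmod (psi n j)) ^ 2) = 1"
proof -
  have "(\<Sum>j\<in>joint_idx n (\<lambda>_. 2). (cmod (psi n j)) ^ 2)
     = (\<Sum>j\<in>joint_idx n (\<lambda>_. 2). (if j \<in> {zz n 0, zz n 1} then (\<lambda>_. (cmod cc)^2) j else 0))"
    by (rule sum.cong) (auto simp: psi_def)
  also have "\<dots> = (cmod cc)^2 + (cmod cc)^2" by (rule sum_two[OF assms])
  also have "(cmod cc)^2 = 1/2" unfolding cc_def norm_of_real by (simp add: power_divide)
  finally show ?thesis by simp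
qed

definition spkf :: "nat \<Rightarrow> bool list \<Rightarrow> nat" where "spkf n t = length t mod n"
definition msgf :: "nat \<Rightarrow> nat \<Rightarrow> nat \<Rightarrow> bool list \<Rightarrow> bool" where "msgf i v b t = (b = 1)"
definition outf :: "bool list \<Rightarrow> nat" where "outf t = sum_list (map of_bool t) mod 2"

lemma transcript_eq:
  "m \<le> n \<Longrightarrow> transcript (spkf n) msgf x a m = map (\<lambda>i. a i = 1) [0..<m]"
  by (induction m) (auto simp: spkf_def msgf_def Let_def)

lemma outf_eq:
  assumes "a \<in> joint_idx n (\<lambda>_. 2)"
  shows "outf (transcript (spkf n) msgf x a n) = (\<Sum>i<n. a i) mod 2"
proof -
  have "sum_list (map of_bool (map (\<lambda>i. a i = 1) [0..<n])) = (\<Sum>i<n. (of_bool (a i = 1) :: nat))"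
    by (simp only: map_map o_def sum_set_upt_conv_sum_list_nat[symmetric] lessThan_atLeast0 set_upt)
  also have "\<dots> = (\<Sum>i<n. a i)"
    using assms unfolding joint_idx_def by (intro sum.cong) (auto simp: PiE_iff less_2_cases_iff)
  finally show ?thesis by (simp add: outf_def transcript_eq)
qed

lemma F_eq:
  assumes "0 < k" "(\<Sum>i<n. x i) = m * k"
  shows "ghz_F n k x = m mod 2"
proof -
  have "m * k mod (2 * k) = (m mod 2) * k" by (metis mult_mod_left)
  then show ?thesis using assms by (simp add: ghz_F_def)
qed

lemma correct:
  assumes n: "1 \<le> n" and k: "1 \<le> k" and x: "x \<in> ghz_dom n k" and a: "a \<in> joint_idx n (\<lambda>_. 2)"
    and p: "outcome_prob n (\<lambda>_. 2) (psi n) (UU k) x a > 0"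
  shows "outf (transcript (spkf n) msgf x a n) = ghz_F n k x"
proof -
  obtain m where m: "(\<Sum>i<n. x i) = m * k"
    using x unfolding ghz_dom_def by (auto simp: mod_eq_0_iff_dvd dvd_def mult.commute)
  define A where "A = (\<Sum>i<n. a i)"
  have "cis (pi * real (\<Sum>i<n. x i) / real k) = cis (real m * pi)"
    using k by (simp add: m mult.commute)
  also have "\<dots> = (-1) ^ m" by (simp flip: DeMoivre)
  finally have c: "cis (pi * real (\<Sum>i<n. x i) / real k) = (-1) ^ m" .
  have "cc * cc ^ n * (1 + (-1) ^ A * (-1::complex) ^ m) \<noteq> 0"
    using p unfolding outcome_prob_def amp[OF n] A_def c by auto
  then have "(1::complex) + (-1) ^ (A + m) \<noteq> 0" by (simp add: power_add)
  then have "even (A + m)"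
  proof (rule contrapos_np)
    assume "odd (A + m)"
    then have "(-1::complex) ^ (A + m) = -1" by simp
    then show "(1::complex) + (-1) ^ (A + m) = 0" by simp
  qed
  then have "A mod 2 = m mod 2" by presburger
  then show ?thesis using outf_eq[OF a] F_eq[OF _ m] k by (simp add: A_def)
qed

theorem lemma1:
  shows "\<exists>C::nat. \<forall>n k::nat. 1 \<le> n \<longrightarrow> 1 \<le> k \<longrightarrow>
           (\<exists>L. L \<le> C * n \<and> ent_cc_le n (ghz_dom n k) (ghz_F n k) L)"
proof (rule exI[of _ 1], intro allI impI)
  fix n k :: nat assume n: "1 \<le> n" and k: "1 \<le> k"
  have "ent_protocol_computes n (ghz_dom n k) (ghz_F n k) (\<lambda>_. 2) (psi n) (UU k) (spkf n) msgf n outf"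
    unfolding ent_protocol_computes_def
    using norm_psi[OF n] unit_UU correct[OF n k] n by (auto simp: spkf_def)
  then show "\<exists>L. L \<le> 1 * n \<and> ent_cc_le n (ghz_dom n k) (ghz_F n k) L"
    unfolding ent_cc_le_def by (intro exI[of _ n] conjI) (simp, blast)
qed

end
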